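(* Fix $M<\infty$, $\kappa\in(0,1/2)$, assume unconfoundedness, and let $\mathcal{G}$ be a class of allocations and $\mathcal{G}_1,\mathcal{G}_2,\dots$ a (finite or countable) sequence with $\mathcal{G}_k\subseteq\mathcal{G}$ of finite VC dimension $V_k$. Given a propensity estimator $\hat e$, let $\mathcal{P}_e$ be a class of distributions with $\sup_{P\in\mathcal{P}_e}E_{P^n}\big[\frac1n\sum_{i=1}^n|\hat\tau_i-\tau_i|\big]=O(\phi_n^{-1})$ for some $\phi_n\to\infty$. Suppose the penalties $C^e_n(k)$ are such that there exist random quantities $\tilde C_n(k)$ ("infeasible penalties") satisfying: (i) there exist positive constants $c_0,c_1$ such that for all $n,k$ and $\epsilon>0$, $\sup_{P\in\mathcal{P}_e\cap\mathcal{P}(M,\kappa)}P^n\big(W_n(\hat G^e_{n,k})-W(\hat G^e_{n,k})-\tilde C_n(k)>\epsilon\big)\le c_1e^{-2c_0n\epsilon^2}$; (ii) there exists a positive constant $C_1$ such that for all $n,k$, $\sup_{P\in\mathcal{P}_e\cap\mathcal{P}(M,\kappa)}E_{P^n}[\tilde C_n(k)]\le C_1\sqrt{V_k/n}$; (iii) $\sup_{P\in\mathcal{P}_e\cap\mathcal{P}(M,\kappa)}E_{P^n}\big[\sup_k|C^e_n(k)-\tilde C_n(k)|\big]=O(\phi_n^{-1})$. Then there exist constants $\Delta,c_0>0$ such that for every $P\in\mathcal{P}_e\cap\mathcal{P}(M,\kappa)$, $$E_{P^n}\big[W^*_{\mathcal{G}}-W(\hat G^e_n)\big]\le\inf_k\Big[E_{P^n}[\tilde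 C_n(k)]+\big(W^*_{\mathcal{G}}-W^*_{\mathcal{G}_k}\big)+\sqrt{\tfrac kn}\Big]+O(\phi_n^{-1})+\sqrt{\frac{\log(\Delta e)}{2c_0n}}.$$
   Context: Potential outcomes $Y(0),Y(1)\in\mathbb{R}$, treatment $D\in\{0,1\}$, covariates $X\in\mathcal{X}\subseteq\mathbb{R}^{d_x}$; observed $Y=Y(1)D+Y(0)(1-D)$; $P$ is the distribution of $(Y,D,X)$, data $\{(Y_i,D_i,X_i)\}_{i=1}^n$ i.i.d. from $P$. Unconfoundedness: $(Y(1),Y(0))\perp D\mid X$. Propensity score $e(x)=E_P[D\mid X=x]$. $\mathcal{P}(M,\kappa)$: distributions with support of $Y$ in $[-M/2,M/2]$ and $e(x)\in[\kappa,1-\kappa]$ for all $x$. Welfare of $G\subseteq\mathcal{X}$: $W(G)=E_P[(\frac{YD}{e(X)}-\frac{Y(1-D)}{1-e(X)})\mathbf{1}\{X\in G\}]$; $W^*_{\mathcal{A}}=\sup_{G\in\mathcal{A}}W(G)$. $\tau_i=\frac{Y_iD_i}{e(X_i)}-\frac{Y_i(1-D_i)}{1-e(X_i)}$, $W_n(G)=\frac1n\sum_i\tau_i\mathbf{1}\{X_i\in G\}$ (infeasible, uses the true $e$). With an estimator $\hat e$ of $e$ and trimming $\epsilon_n=O(n^{-\alpha})$ for some $\alpha>0$: $\hat\tau_i=\big[\frac{Y_iD_i}{\hat e(X_i)}-\frac{Y_i(1-D_i)}{1-\hat e(X_i)}\big]\mathbf{1}\{\epsilon_n\le\hat e(X_i)\le1-\epsilon_n\}$,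 $W^e_n(G)=\frac1n\sum_i\hat\tau_i\mathbf{1}\{X_i\in G\}$, $\hat G^e_{n,k}\in\arg\max_{G\in\mathcal{G}_k}W^e_n(G)$. With penalties $C^e_n(k)$, $R^e_{n,k}(G)=W^e_n(G)-C^e_n(k)-\sqrt{k/n}$ and the (e-hybrid) PWM rule is $\hat G^e_n=\hat G^e_{n,\hat k}$ with $\hat k\in\arg\max_kR^e_{n,k}(\hat G^e_{n,k})$. Maximizers assumed to exist. *)

theory Defs
  imports "HOL-Probability.Probability" "HOL-Library.Landau_Symbols"
begin

text \<open>An observation is a triple (Y, D, X): outcome, treatment indicator (True = treated),
  covariates in a Euclidean space.\<close>
type_synonym 'x obs = "real \<times> bool \<times> 'x"

definition Yv :: "'x obs \<Rightarrow> real" where "Yv w = fst w"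
definition Dv :: "'x obs \<Rightarrow> real" where "Dv w = of_bool (fst (snd w))"
definition Xv :: "'x obs \<Rightarrow> 'x" where "Xv w = snd (snd w)"

definition obsM :: "('x::euclidean_space) obs measure" where
  "obsM = borel \<Otimes>\<^sub>M (count_space UNIV \<Otimes>\<^sub>M borel)"

definition SampleM :: "nat \<Rightarrow> (nat \<Rightarrow> ('x::euclidean_space) obs) measure" where
  "SampleM n = PiM {..<n} (\<lambda>_. obsM)"

definition Pn :: "('x::euclidean_space) obs measure \<Rightarrow> nat \<Rightarrow> (nat \<Rightarrow> 'x obs) measure" where
  "Pn P n = PiM {..<n} (\<lambda>_. P)"

text \<open>e is a version of the propensity score E_P[D | X = x].\<close>
definition is_propensity :: "('x::euclidean_space) obs measure \<Rightarrow> ('x \<Rightarrow> real) \<Rightarrow> bool" where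
  "is_propensity P e \<longleftrightarrow> e \<in> borel_measurable borel \<and>
     (\<forall>A\<in>sets borel. (\<integral>w. indicator A (Xv w) * Dv w \<partial>P) = (\<integral>w. indicator A (Xv w) * e (Xv w) \<partial>P))"

text \<open>The class P(M, kappa); ps selects for each distribution its propensity score.\<close>
definition PMk :: "(('x::euclidean_space) obs measure \<Rightarrow> 'x \<Rightarrow> real) \<Rightarrow> real \<Rightarrow> real \<Rightarrow> 'x obs measure set" where
  "PMk ps M \<kappa> = {P. prob_space P \<and> sets P = sets obsM \<and> is_propensity P (ps P) \<and>
      (AE w in P. \<bar>Yv w\<bar> \<le> M / 2) \<and> (\<forall>x. \<kappa> \<le> ps P x \<and> ps P x \<le> 1 - \<kappa>)}"

definition tau :: "('x \<Rightarrow> real) \<Rightarrow> 'x obs \<Rightarrow> real" where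
  "tau e w = Yv w * Dv w / e (Xv w) - Yv w * (1 - Dv w) / (1 - e (Xv w))"

definition Welfare :: "('x \<Rightarrow> real) \<Rightarrow> 'x obs measure \<Rightarrow> 'x set \<Rightarrow> real" where
  "Welfare e P G = (\<integral>w. tau e w * indicator G (Xv w) \<partial>P)"

definition Wstar :: "('x \<Rightarrow> real) \<Rightarrow> 'x obs measure \<Rightarrow> 'x set set \<Rightarrow> real" where
  "Wstar e P A = (SUP G\<in>A. Welfare e P G)"

definition Wn :: "('x \<Rightarrow> real) \<Rightarrow> nat \<Rightarrow> (nat \<Rightarrow> 'x obs) \<Rightarrow> 'x set \<Rightarrow> real" where
  "Wn e n s G = (1 / real n) * (\<Sum>i<n. tau e (s i) * indicator G (Xv (s i)))"

text \<open>Trimmed IPW score with estimated propensity score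
  (ehat n s is the estimate computed from the sample s of size n; eps n is the trimming).\<close>
definition tauhat :: "(nat \<Rightarrow> (nat \<Rightarrow> 'x obs) \<Rightarrow> 'x \<Rightarrow> real) \<Rightarrow> (nat \<Rightarrow> real)
    \<Rightarrow> nat \<Rightarrow> (nat \<Rightarrow> 'x obs) \<Rightarrow> nat \<Rightarrow> real" where
  "tauhat ehat eps n s i =
     (let w = s i; eh = ehat n s (Xv w) in
       (Yv w * Dv w / eh - Yv w * (1 - Dv w) / (1 - eh))
       * indicator {eps n .. 1 - eps n} eh)"

definition Wen :: "(nat \<Rightarrow> (nat \<Rightarrow> 'x obs) \<Rightarrow> 'x \<Rightarrow> real) \<Rightarrow> (nat \<Rightarrow> real)
    \<Rightarrow> nat \<Rightarrow> (nat \<Rightarrow> 'x obs) \<Rightarrow> 'x set \<Rightarrow> real" where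
  "Wen ehat eps n s G = (1 / real n) * (\<Sum>i<n. tauhat ehat eps n s i * indicator G (Xv (s i)))"

definition Ren :: "(nat \<Rightarrow> (nat \<Rightarrow> 'x obs) \<Rightarrow> 'x \<Rightarrow> real) \<Rightarrow> (nat \<Rightarrow> real)
    \<Rightarrow> (nat \<Rightarrow> nat \<Rightarrow> (nat \<Rightarrow> 'x obs) \<Rightarrow> real)
    \<Rightarrow> nat \<Rightarrow> nat \<Rightarrow> (nat \<Rightarrow> 'x obs) \<Rightarrow> 'x set \<Rightarrow> real" where
  "Ren ehat eps Cpen n k s G = Wen ehat eps n s G - Cpen n k s - sqrt (real k / real n)"

definition shatters :: "'a set set \<Rightarrow> 'a set \<Rightarrow> bool" where
  "shatters C A \<longleftrightarrow> (\<forall>B\<subseteq>A. \<exists>G\<in>C. G \<inter> A = B)"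

definition finite_VC :: "'a set set \<Rightarrow> bool" where
  "finite_VC C \<longleftrightarrow> (\<exists>V::nat. \<forall>A. finite A \<and> shatters C A \<longrightarrow> card A \<le> V)"

definition VC_dim :: "'a set set \<Rightarrow> nat" where
  "VC_dim C = (GREATEST d. \<exists>A. finite A \<and> card A = d \<and> shatters C A)"

end

theory Submission
  imports Defs "HOL-Library.Landau_Symbols"
begin


lemma pos_part_le_series:
  fixes x d :: real assumes d: "d > 0"
  shows "ennreal (max x 0) \<le> (\<Sum>j. ennreal d * indicator {y. y > real j * d} x)"
proof (cases "x > 0")
  case False then show ?thesis by (simp add: max_def)
next
  case True
  define m where "m = nat \<lceil>x / d\<rceil>"
  have xm: "x \<le> real m * d"
    using d unfolding m_def
    by (metis (no_types, opaque_lifting) True divide_le_eq less_eq_real_def of_nat_nat real_nat_ceiling_ge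
        ceiling_le_zero not_less mult.commute)
  have "ennreal (max x 0) \<le> ennreal (real m * d)" using xm True by (simp add: max_def)
  also have "\<dots> = (\<Sum>j<m. ennreal d * indicator {y. y > real j * d} x)"
  proof -
    have "\<And>j. j < m \<Longrightarrow> real j * d < x"
    proof -
      fix j assume "j < m"
      then have "int j < \<lceil>x / d\<rceil>" unfolding m_def by linarith
      then have "real j < x / d" by (simp add: less_ceiling_iff)
      then show "real j * d < x" using d by (simp add: pos_less_divide_eq)
    qed
    then have "(\<Sum>j<m. ennreal d * indicator {y. y > real j * d} x) = (\<Sum>j<m. ennreal d)"
      by (intro sum.cong) auto
    also have "\<dots> = ennreal (real m * d)" using d by (simp add: ennreal_of_nat_eq_real_of_nat ennreal_mult)
    finally show ?thesis by simp
  qed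
  also have "\<dots> \<le> (\<Sum>j. ennreal d * indicator {y. y > real j * d} x)"
    by (rule sum_le_suminf[OF summableI]) auto
  finally show ?thesis .
qed

lemma tail_lemma:
  fixes X :: "'a \<Rightarrow> real"
  assumes Q: "prob_space Q" and Xm: "X \<in> borel_measurable Q" and a: "a \<ge> 0" and b: "b > 0" and n: "n \<ge> 1"
    and tl: "\<And>t. t \<ge> 0 \<Longrightarrow> measure Q {s\<in>space Q. X s > t} \<le> a * exp (- b * real n * t\<^sup>2)"
  shows "(\<integral>\<^sup>+s. ennreal (max (X s) 0) \<partial>Q) \<le> ennreal (a / (1 - exp (- b)) / sqrt n)"
proof -
  interpret prob_space Q by fact
  define d where "d = 1 / sqrt (real n)"
  have d: "d > 0" using n by (simp add: d_def)
  have "(\<integral>\<^sup>+s. ennreal (max (X s) 0) \<partial>Q) \<le> (\<integral>\<^sup>+s. (\<Sum>j. ennreal d * indicator {s\<in>space Q. X s > real j * d} s) \<partial>Q)"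
    by (intro nn_integral_mono) (use pos_part_le_series[OF d] in \<open>auto simp: indicator_def\<close>)
  also have "\<dots> = (\<Sum>j. (\<integral>\<^sup>+s. ennreal d * indicator {s\<in>space Q. X s > real j * d} s \<partial>Q))"
    by (rule nn_integral_suminf) (use Xm in measurable)
  also have "\<dots> = (\<Sum>j. ennreal (d * measure Q {s\<in>space Q. X s > real j * d}))"
    apply (intro suminf_cong)
    apply (subst nn_integral_cmult_indicator)
    using Xm d by (auto simp: emeasure_eq_measure ennreal_mult)
  also have "\<dots> \<le> (\<Sum>j. ennreal (d * a * exp (- b) ^ j))"
  proof (intro suminf_le summableI ennreal_leI)
    fix j :: nat
    have m1: "measure Q {s\<in>space Q. X s > real j * d} \<le> a * exp (- b * real n * (real j * d)\<^sup>2)"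
      using tl[of "real j * d"] d by auto
    have e1: "real n * (real j * d)\<^sup>2 = (real j)\<^sup>2" using n
      by (simp add: d_def power_mult_distrib power_divide)
    have e2: "exp (- b * (real j)\<^sup>2) \<le> exp (- b) ^ j"
    proof -
      have "real j \<le> (real j)\<^sup>2" by (cases j) (auto simp: power2_eq_square)
      then have "- b * (real j)\<^sup>2 \<le> - b * real j" using b by (simp add: mult_left_mono)
      then show ?thesis by (simp add: exp_of_nat_mult[symmetric] mult.commute)
    qed
    have "exp (- b * real n * (real j * d)\<^sup>2) \<le> exp (- b) ^ j"
      using e1 e2 by (simp add: mult.assoc)
    then have "measure Q {s\<in>space Q. X s > real j * d} \<le> a * exp (- b) ^ j"
      using a m1 by (meson mult_left_mono order_trans)
    then show "d * measure Q {s\<in>space Q. X s > real j * d} \<le> d * a * exp (- b) ^ j"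
      using d by (simp add: mult_left_mono mult.assoc)
  qed
  also have "\<dots> = ennreal (d * a * (1 / (1 - exp (- b))))"
  proof (rule suminf_ennreal_eq)
    show "\<And>i. 0 \<le> d * a * exp (- b) ^ i" using d a by auto
    have "(\<lambda>j. exp (- b) ^ j) sums (1 / (1 - exp (- b)))"
      using geometric_sums[of "exp (-b)"] b by simp
    then show "(\<lambda>j. d * a * exp (- b) ^ j) sums (d * a * (1 / (1 - exp (- b))))"
      by (rule sums_mult)
  qed
  also have "d * a * (1 / (1 - exp (- b))) = a / (1 - exp (- b)) / sqrt n" by (simp add: d_def)
  finally show ?thesis .
qed


lemma obs_meas[measurable]:
  "Yv \<in> borel_measurable obsM" "Dv \<in> borel_measurable obsM" "Xv \<in> measurable obsM borel"
  unfolding Yv_def[abs_def] Dv_def[abs_def] Xv_def[abs_def] obsM_def by measurable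

lemma tau_meas[measurable]:
  assumes [measurable]: "e \<in> borel_measurable borel"
  shows "tau e \<in> borel_measurable obsM"
  unfolding tau_def[abs_def] by measurable

lemma PMk_facts:
  assumes P: "P \<in> PMk ps M \<kappa>" and k: "0 < \<kappa>" "\<kappa> < 1/2"
  shows "prob_space P" "sets P = sets obsM" "space P = space obsM"
    "ps P \<in> borel_measurable borel" "tau (ps P) \<in> borel_measurable P"
    "AE w in P. \<bar>tau (ps P) w\<bar> \<le> \<bar>M\<bar> / \<kappa>"
    "integrable P (tau (ps P))"
    "(\<integral>w. \<bar>tau (ps P) w\<bar> \<partial>P) \<le> \<bar>M\<bar> / \<kappa>"
proof -
  show pr: "prob_space P" and se: "sets P = sets obsM" using P by (auto simp: PMk_def)
  then show "space P = space obsM" using sets_eq_imp_space_eq by blast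
  show em: "ps P \<in> borel_measurable borel" using P by (auto simp: PMk_def is_propensity_def)
  show tm: "tau (ps P) \<in> borel_measurable P"
    using tau_meas[OF em] measurable_cong_sets[OF se refl] by blast
  have eb: "\<And>x. \<kappa> \<le> ps P x \<and> ps P x \<le> 1 - \<kappa>" using P by (auto simp: PMk_def)
  have "\<bar>tau (ps P) w\<bar> \<le> \<bar>M\<bar> / \<kappa>" if Y: "\<bar>Yv w\<bar> \<le> M / 2" for w
  proof -
    let ?e = "ps P (Xv w)"
    have e1: "\<kappa> \<le> ?e" "\<kappa> \<le> 1 - ?e" using eb[of "Xv w"] by auto
    have YM: "\<bar>Yv w\<bar> \<le> \<bar>M\<bar>" using Y by linarith
    show ?thesis
    proof (cases "fst (snd w)")
      case True
      then have "tau (ps P) w = Yv w / ?e" by (simp add: tau_def Dv_def)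
      moreover have "\<bar>Yv w / ?e\<bar> \<le> \<bar>M\<bar> / \<kappa>"
        using e1 k YM by (simp add: abs_divide frac_le)
      ultimately show ?thesis by simp
    next
      case False
      then have "tau (ps P) w = - (Yv w / (1 - ?e))" by (simp add: tau_def Dv_def)
      moreover have "\<bar>Yv w / (1 - ?e)\<bar> \<le> \<bar>M\<bar> / \<kappa>"
        using e1 k YM by (simp add: abs_divide frac_le)
      ultimately show ?thesis by simp
    qed
  qed
  moreover have "AE w in P. \<bar>Yv w\<bar> \<le> M / 2" using P by (auto simp: PMk_def)
  ultimately show ae: "AE w in P. \<bar>tau (ps P) w\<bar> \<le> \<bar>M\<bar> / \<kappa>" by (auto elim: AE_mp)
  interpret prob_space P by fact
  show "integrable P (tau (ps P))"
    by (rule integrable_const_bound[where B="\<bar>M\<bar> / \<kappa>"]) (use ae tm in auto)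
  have "(\<integral>w. \<bar>tau (ps P) w\<bar> \<partial>P) \<le> (\<integral>w. \<bar>M\<bar> / \<kappa> \<partial>P)"
    by (rule integral_mono_AE) (use ae tm in \<open>auto intro!: integrable_const_bound[where B="\<bar>M\<bar> / \<kappa>"]\<close>)
  then show "(\<integral>w. \<bar>tau (ps P) w\<bar> \<partial>P) \<le> \<bar>M\<bar> / \<kappa>" by (simp add: prob_space)
qed

lemma welfare_facts:
  assumes P: "P \<in> PMk ps M \<kappa>" and k: "0 < \<kappa>" "\<kappa> < 1/2" and G: "G \<in> sets borel"
  shows "integrable P (\<lambda>w. tau (ps P) w * indicator G (Xv w))"
    "\<bar>Welfare (ps P) P G\<bar> \<le> \<bar>M\<bar> / \<kappa>"
proof -
  note F = PMk_facts[OF P k]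
  interpret prob_space P by (fact F)
  have Xm: "Xv \<in> measurable P borel" using measurable_cong_sets[OF F(2) refl] obs_meas by blast
  have m: "(\<lambda>w. tau (ps P) w * indicator G (Xv w)) \<in> borel_measurable P"
    using F(5) Xm G by measurable
  show i: "integrable P (\<lambda>w. tau (ps P) w * indicator G (Xv w))"
    by (rule Bochner_Integration.integrable_bound[OF F(7) m]) (auto simp: indicator_def)
  have "\<bar>Welfare (ps P) P G\<bar> \<le> (\<integral>w. \<bar>tau (ps P) w * indicator G (Xv w)\<bar> \<partial>P)"
    unfolding Welfare_def by (rule integral_abs_bound)
  also have "\<dots> \<le> (\<integral>w. \<bar>tau (ps P) w\<bar> \<partial>P)"
    by (rule integral_mono) (use i F in \<open>auto simp: indicator_def\<close>)
  finally show "\<bar>Welfare (ps P) P G\<bar> \<le> \<bar>M\<bar> / \<kappa>" using F(8) by simp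
qed


lemma Pn_facts:
  assumes pr: "prob_space P" and se: "sets P = sets obsM"
  shows "prob_space (Pn P n)" "sets (Pn P n) = sets (SampleM n)" "space (Pn P n) = space (SampleM n)"
proof -
  show "prob_space (Pn P n)" unfolding Pn_def by (rule prob_space_PiM) (use pr in auto)
  show s: "sets (Pn P n) = sets (SampleM n)" unfolding Pn_def SampleM_def
    by (rule sets_PiM_cong) (use se in auto)
  then show "space (Pn P n) = space (SampleM n)" using sets_eq_imp_space_eq by blast
qed

lemma comp_meas[measurable]: "i < n \<Longrightarrow> (\<lambda>s. s i) \<in> measurable (SampleM n) obsM"
  unfolding SampleM_def by (rule measurable_component_singleton) auto

lemma Pn_integral:
  fixes g :: "('x::euclidean_space) obs \<Rightarrow> real"
  assumes pr: "prob_space P" and se: "sets P = sets obsM" and i: "i < n"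
    and g: "g \<in> borel_measurable P"
  shows "(\<integral>s. g (s i) \<partial>Pn P n) = (\<integral>w. g w \<partial>P)"
    "integrable P g \<Longrightarrow> integrable (Pn P n) (\<lambda>s. g (s i))"
proof -
  have d: "distr (Pn P n) P (\<lambda>s. s i) = P"
    unfolding Pn_def by (rule distr_PiM_component) (use pr i in auto)
  have m: "(\<lambda>s. s i) \<in> measurable (Pn P n) P"
    unfolding Pn_def by (rule measurable_component_singleton) (use i in auto)
  show "(\<integral>s. g (s i) \<partial>Pn P n) = (\<integral>w. g w \<partial>P)"
    using integral_distr[OF m g] d by simp
  assume "integrable P g"
  then show "integrable (Pn P n) (\<lambda>s. g (s i))"
    using integrable_distr_eq[OF m g] d by simp
qed



lemma pair_Xv_meas:
  assumes se: "sets P = sets obsM"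
  shows "(\<lambda>(s, w). (s, Xv w)) \<in> measurable (N \<Otimes>\<^sub>M P) (N \<Otimes>\<^sub>M borel)"
proof -
  have Xm: "Xv \<in> measurable P borel" using measurable_cong_sets[OF se refl] obs_meas by blast
  have "(\<lambda>z. (fst z, Xv (snd z))) \<in> measurable (N \<Otimes>\<^sub>M P) (N \<Otimes>\<^sub>M borel)"
    using Xm by measurable
  then show ?thesis by (simp add: split_beta')
qed

lemma welfare_meas:
  assumes pr: "prob_space P" and se: "sets P = sets obsM" and e[measurable]: "e \<in> borel_measurable borel"
    and h: "(\<lambda>(s, x). indicator (Gh s) x :: real) \<in> borel_measurable (SampleM n \<Otimes>\<^sub>M borel)"
  shows "(\<lambda>s. Welfare e P (Gh s)) \<in> borel_measurable (SampleM n)"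
proof -
  interpret prob_space P by fact
  have tm: "tau e \<in> borel_measurable P" using tau_meas[OF e] measurable_cong_sets[OF se refl] by blast
  have c: "(\<lambda>z. (\<lambda>(s, x). indicator (Gh s) x :: real) ((\<lambda>(s, w). (s, Xv w)) z)) \<in> borel_measurable (SampleM n \<Otimes>\<^sub>M P)"
    by (rule measurable_compose[OF pair_Xv_meas[OF se] h])
  have "(\<lambda>(s, w). tau e w * indicator (Gh s) (Xv w) :: real) \<in> borel_measurable (SampleM n \<Otimes>\<^sub>M P)"
  proof -
    have "(\<lambda>z. tau e (snd z) * (\<lambda>(s, x). indicator (Gh s) x :: real) ((\<lambda>(s, w). (s, Xv w)) z)) \<in> borel_measurable (SampleM n \<Otimes>\<^sub>M P)"
      using c tm by measurable
    then show ?thesis by (simp add: split_beta')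
  qed
  then have "(\<lambda>s. \<integral>w. tau e w * indicator (Gh s) (Xv w) \<partial>P) \<in> borel_measurable (SampleM n)"
    by (rule borel_measurable_lebesgue_integral[where f="\<lambda>s w. tau e w * indicator (Gh s) (Xv w)"])
  then show ?thesis unfolding Welfare_def .
qed

lemma Wn_meas:
  assumes e[measurable]: "e \<in> borel_measurable borel"
    and h: "(\<lambda>(s, x). indicator (Gh s) x :: real) \<in> borel_measurable (SampleM n \<Otimes>\<^sub>M borel)"
  shows "(\<lambda>s. Wn e n s (Gh s)) \<in> borel_measurable (SampleM n)"
proof -
  have "(\<lambda>s. tau e (s i) * indicator (Gh s) (Xv (s i))) \<in> borel_measurable (SampleM n)" if i: "i < n" for i
  proof -
    have p: "(\<lambda>s. (s, Xv (s i))) \<in> measurable (SampleM n) (SampleM n \<Otimes>\<^sub>M borel)"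
      using i by measurable
    have "(\<lambda>s. (\<lambda>(s, x). indicator (Gh s) x :: real) ((\<lambda>s. (s, Xv (s i))) s)) \<in> borel_measurable (SampleM n)"
      by (rule measurable_compose[OF p h])
    then have m2: "(\<lambda>s. indicator (Gh s) (Xv (s i)) :: real) \<in> borel_measurable (SampleM n)" by simp
    have m1: "(\<lambda>s. tau e (s i)) \<in> borel_measurable (SampleM n)" using i by measurable
    show ?thesis by (rule borel_measurable_times[OF m1 m2])
  qed
  then have "(\<lambda>s. \<Sum>i<n. tau e (s i) * indicator (Gh s) (Xv (s i)) :: real) \<in> borel_measurable (SampleM n)"
    by (intro borel_measurable_sum) auto
  then show ?thesis unfolding Wn_def by measurable
qed

lemma Wn_const_meas:
  assumes e: "e \<in> borel_measurable borel" and G: "G \<in> sets borel"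
  shows "(\<lambda>s. Wn e n s G) \<in> borel_measurable (SampleM n)"
  using Wn_meas[OF e, of "\<lambda>_. G" n] G by measurable

lemma D_meas:
  assumes e[measurable]: "e \<in> borel_measurable borel"
    and eh: "(\<lambda>(s, x). ehat n s x) \<in> borel_measurable (SampleM n \<Otimes>\<^sub>M borel)"
  shows "(\<lambda>s. (1 / real n) * (\<Sum>i<n. \<bar>tauhat ehat eps n s i - tau e (s i)\<bar>)) \<in> borel_measurable (SampleM n)"
proof -
  have "(\<lambda>s. \<bar>tauhat ehat eps n s i - tau e (s i)\<bar>) \<in> borel_measurable (SampleM n)" if i: "i < n" for i
  proof -
    have p: "(\<lambda>s. (s, Xv (s i))) \<in> measurable (SampleM n) (SampleM n \<Otimes>\<^sub>M borel)"
      using i by measurable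
    have em[measurable]: "(\<lambda>s. ehat n s (Xv (s i))) \<in> borel_measurable (SampleM n)"
      using measurable_compose[OF p eh] by simp
    show ?thesis unfolding tauhat_def Let_def using i by measurable
  qed
  then show ?thesis by (intro borel_measurable_times borel_measurable_sum) auto
qed



lemma Wn_expect:
  assumes P: "P \<in> PMk ps M \<kappa>" and k: "0 < \<kappa>" "\<kappa> < 1/2" and G: "G \<in> sets borel" and n: "n \<ge> 1"
  shows "integrable (Pn P n) (\<lambda>s. Wn (ps P) n s G)" "(\<integral>s. Wn (ps P) n s G \<partial>Pn P n) = Welfare (ps P) P G"
proof -
  note F = PMk_facts[OF P k]
  note W = welfare_facts[OF P k G]
  define g where "g w = tau (ps P) w * indicator G (Xv w)" for w
  have gm: "g \<in> borel_measurable P" using W(1) unfolding g_def by auto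
  have gi: "integrable P g" using W(1) unfolding g_def by auto
  have ii: "\<And>i. i < n \<Longrightarrow> integrable (Pn P n) (\<lambda>s. g (s i))"
    using Pn_integral(2)[OF F(1) F(2) _ gm gi] by auto
  have e: "Wn (ps P) n s G = (1 / real n) * (\<Sum>i<n. g (s i))" for s
    unfolding Wn_def g_def by simp
  show "integrable (Pn P n) (\<lambda>s. Wn (ps P) n s G)"
    unfolding e by (intro integrable_mult_right integrable_sum) (use ii in auto)
  have "(\<integral>s. Wn (ps P) n s G \<partial>Pn P n) = (1 / real n) * (\<Sum>i<n. \<integral>s. g (s i) \<partial>Pn P n)"
    unfolding e by (subst integral_mult_right_zero) (use ii in \<open>auto intro!: integral_sum\<close>)
  also have "\<dots> = (1 / real n) * (\<Sum>i<n. \<integral>w. g w \<partial>P)"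
    using Pn_integral(1)[OF F(1) F(2) _ gm] by simp
  also have "\<dots> = Welfare (ps P) P G" using n unfolding Welfare_def g_def by simp
  finally show "(\<integral>s. Wn (ps P) n s G \<partial>Pn P n) = Welfare (ps P) P G" .
qed

lemma abs_tau_sum:
  assumes P: "P \<in> PMk ps M \<kappa>" and k: "0 < \<kappa>" "\<kappa> < 1/2" and n: "n \<ge> 1"
  shows "integrable (Pn P n) (\<lambda>s. (1 / real n) * (\<Sum>i<n. \<bar>tau (ps P) (s i)\<bar>))"
    "(\<integral>s. (1 / real n) * (\<Sum>i<n. \<bar>tau (ps P) (s i)\<bar>) \<partial>Pn P n) \<le> \<bar>M\<bar> / \<kappa>"
proof -
  note F = PMk_facts[OF P k]
  define g where "g w = \<bar>tau (ps P) w\<bar>" for w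
  have gm: "g \<in> borel_measurable P" using F(5) unfolding g_def by auto
  have gi: "integrable P g" using F(7) unfolding g_def by auto
  have ii: "\<And>i. i < n \<Longrightarrow> integrable (Pn P n) (\<lambda>s. g (s i))"
    using Pn_integral(2)[OF F(1) F(2) _ gm gi] by auto
  show "integrable (Pn P n) (\<lambda>s. (1 / real n) * (\<Sum>i<n. \<bar>tau (ps P) (s i)\<bar>))"
    unfolding g_def[symmetric] by (intro integrable_mult_right integrable_sum) (use ii in auto)
  have "(\<integral>s. (1 / real n) * (\<Sum>i<n. g (s i)) \<partial>Pn P n) = (1 / real n) * (\<Sum>i<n. \<integral>s. g (s i) \<partial>Pn P n)"
    by (subst integral_mult_right_zero) (use ii in \<open>auto intro!: integral_sum\<close>)
  also have "\<dots> = (1 / real n) * (\<Sum>i<n. \<integral>w. g w \<partial>P)"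
    using Pn_integral(1)[OF F(1) F(2) _ gm] by simp
  also have "\<dots> = (\<integral>w. g w \<partial>P)" using n by simp
  finally show "(\<integral>s. (1 / real n) * (\<Sum>i<n. \<bar>tau (ps P) (s i)\<bar>) \<partial>Pn P n) \<le> \<bar>M\<bar> / \<kappa>"
    using F(8) unfolding g_def by simp
qed

lemma Wn_abs_le: "\<bar>Wn e n s G\<bar> \<le> (1 / real n) * (\<Sum>i<n. \<bar>tau e (s i)\<bar>)"
proof -
  have "\<bar>\<Sum>i<n. tau e (s i) * indicator G (Xv (s i))\<bar> \<le> (\<Sum>i<n. \<bar>tau e (s i) * indicator G (Xv (s i))\<bar>)"
    by (rule sum_abs)
  also have "\<dots> \<le> (\<Sum>i<n. \<bar>tau e (s i)\<bar>)"
    by (intro sum_mono) (auto simp: indicator_def)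
  finally show ?thesis unfolding Wn_def by (simp add: abs_mult divide_right_mono)
qed

lemma Wen_Wn_le:
  "\<bar>Wen ehat eps n s G - Wn e n s G\<bar> \<le> (1 / real n) * (\<Sum>i<n. \<bar>tauhat ehat eps n s i - tau e (s i)\<bar>)"
proof -
  have "Wen ehat eps n s G - Wn e n s G = (1 / real n) * (\<Sum>i<n. (tauhat ehat eps n s i - tau e (s i)) * indicator G (Xv (s i)))"
    unfolding Wen_def Wn_def by (simp add: sum_subtractf left_diff_distrib right_diff_distrib)
  moreover have "\<bar>\<Sum>i<n. (tauhat ehat eps n s i - tau e (s i)) * indicator G (Xv (s i))\<bar> \<le> (\<Sum>i<n. \<bar>tauhat ehat eps n s i - tau e (s i)\<bar>)"
    by (rule order_trans[OF sum_abs]) (auto intro!: sum_mono simp: indicator_def)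
  ultimately show ?thesis by (simp add: abs_mult divide_right_mono)
qed



lemma enn_aux: "(a::ennreal) < top \<Longrightarrow> b < top \<Longrightarrow> 0 \<le> d \<Longrightarrow> enn2real (2 * ennreal d + 2 * a + b) = 2 * d + 2 * enn2real a + enn2real b"
proof -
  assume a: "a < top" and b: "b < top" and d: "0 \<le> d"
  have t1: "2 * ennreal d < top" by (simp add: ennreal_mult_less_top)
  have t2: "2 * a < top" using a by (simp add: ennreal_mult_less_top)
  have "enn2real (2 * ennreal d + 2 * a + b) = enn2real (2 * ennreal d + 2 * a) + enn2real b"
    by (rule enn2real_plus) (use t1 t2 b in auto)
  also have "enn2real (2 * ennreal d + 2 * a) = enn2real (2 * ennreal d) + enn2real (2 * a)"
    by (rule enn2real_plus[OF t1 t2])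
  finally show ?thesis using d by (simp add: enn2real_mult)
qed

lemma Wstar_facts:
  assumes P: "P \<in> PMk ps M \<kappa>" and k: "0 < \<kappa>" "\<kappa> < 1/2" and A: "A \<subseteq> sets borel" "A \<noteq> {}"
  shows "bdd_above (Welfare (ps P) P ` A)"
    "\<And>G. G \<in> A \<Longrightarrow> Welfare (ps P) P G \<le> Wstar (ps P) P A"
    "Wstar (ps P) P A \<le> \<bar>M\<bar> / \<kappa>"
    "- (\<bar>M\<bar> / \<kappa>) \<le> Wstar (ps P) P A"
proof -
  have b: "\<And>G. G \<in> A \<Longrightarrow> \<bar>Welfare (ps P) P G\<bar> \<le> \<bar>M\<bar> / \<kappa>"
    using welfare_facts(2)[OF P k] A by auto
  show bd: "bdd_above (Welfare (ps P) P ` A)"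
    by (rule bdd_aboveI[where M="\<bar>M\<bar> / \<kappa>"]) (use b in force)
  show up: "\<And>G. G \<in> A \<Longrightarrow> Welfare (ps P) P G \<le> Wstar (ps P) P A"
    unfolding Wstar_def by (rule cSUP_upper[OF _ bd])
  show "Wstar (ps P) P A \<le> \<bar>M\<bar> / \<kappa>"
    unfolding Wstar_def by (rule cSUP_least) (use A b in force)+
  obtain G where "G \<in> A" using A by auto
  then show "- (\<bar>M\<bar> / \<kappa>) \<le> Wstar (ps P) P A"
    using up[of G] b[of G] by linarith
qed

lemma Wstar_mono:
  assumes P: "P \<in> PMk ps M \<kappa>" and k: "0 < \<kappa>" "\<kappa> < 1/2" and A: "A \<subseteq> A'" "A' \<subseteq> sets borel" "A \<noteq> {}"
  shows "Wstar (ps P) P A \<le> Wstar (ps P) P A'"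
proof -
  have "A' \<noteq> {}" using A by auto
  then have "bdd_above (Welfare (ps P) P ` A')" by (rule Wstar_facts(1)[OF P k A(2)])
  then show ?thesis unfolding Wstar_def by (rule cSUP_subset_mono[rotated]) (use A in auto)
qed

lemma compose_K:
  fixes F :: "nat \<Rightarrow> 'a \<Rightarrow> 'b::topological_space"
  assumes F: "\<And>k. k \<in> K \<Longrightarrow> F k \<in> borel_measurable N"
    and g: "g \<in> measurable N (count_space UNIV)" and gK: "\<And>s. s \<in> space N \<Longrightarrow> g s \<in> K"
  shows "(\<lambda>s. F (g s) s) \<in> borel_measurable N"
proof -
  obtain c :: 'b where True by auto
  have "(\<lambda>s. (\<lambda>i s. if i \<in> K then F i s else c) (g s) s) \<in> borel_measurable N"
  proof (rule measurable_compose_countable[OF _ g])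
    fix i show "(\<lambda>s. if i \<in> K then F i s else c) \<in> borel_measurable N"
      by (cases "i \<in> K") (use F in auto)
  qed
  then show ?thesis by (rule measurable_cong[THEN iffD1, rotated]) (use gK in auto)
qed


theorem theorem3p2:
  fixes ps :: "('x::euclidean_space) obs measure \<Rightarrow> 'x \<Rightarrow> real"
    and M \<kappa> :: real
    and \<G> :: "'x set set"
    and K :: "nat set"
    and Gs :: "nat \<Rightarrow> 'x set set"
    and ehat :: "nat \<Rightarrow> (nat \<Rightarrow> 'x obs) \<Rightarrow> 'x \<Rightarrow> real"
    and eps :: "nat \<Rightarrow> real"
    and \<phi> :: "nat \<Rightarrow> real"
    and Pe :: "'x obs measure set"
    and Cpen :: "nat \<Rightarrow> nat \<Rightarrow> (nat \<Rightarrow> 'x obs) \<Rightarrow> real"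
    and Ctil :: "'x obs measure \<Rightarrow> nat \<Rightarrow> nat \<Rightarrow> (nat \<Rightarrow> 'x obs) \<Rightarrow> real"
    and Ghat :: "nat \<Rightarrow> nat \<Rightarrow> (nat \<Rightarrow> 'x obs) \<Rightarrow> 'x set"
    and khat :: "nat \<Rightarrow> (nat \<Rightarrow> 'x obs) \<Rightarrow> nat"
  assumes kappa: "0 < \<kappa>" "\<kappa> < 1 / 2"
    and G_meas: "\<G> \<subseteq> sets borel"
    and K_index: "K = {k. 1 \<le> k} \<or> (\<exists>m\<ge>1. K = {1..m})"
    and Gs_sub: "\<And>k. k \<in> K \<Longrightarrow> Gs k \<subseteq> \<G>"
    and Gs_VC: "\<And>k. k \<in> K \<Longrightarrow> finite_VC (Gs k)"
    and trimming: "\<exists>\<alpha>>0. eps \<in> O(\<lambda>n. real n powr (- \<alpha>))"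
    and phi_lim: "filterlim \<phi> at_top at_top"
    and Pe_rate: "\<exists>c N. \<forall>n\<ge>N. \<forall>P\<in>Pe.
         (\<integral>\<^sup>+ s. ennreal ((1 / real n) * (\<Sum>i<n. \<bar>tauhat ehat eps n s i - tau (ps P) (s i)\<bar>)) \<partial>Pn P n)
           \<le> ennreal (c / \<phi> n)"
    and ehat_meas: "\<And>n. (\<lambda>(s, x). ehat n s x) \<in> borel_measurable (SampleM n \<Otimes>\<^sub>M borel)"
    and Ghat_meas: "\<And>n k. k \<in> K \<Longrightarrow>
         (\<lambda>(s, x). indicator (Ghat n k s) x :: real) \<in> borel_measurable (SampleM n \<Otimes>\<^sub>M borel)"
    and Ghat_max: "\<And>n k s. k \<in> K \<Longrightarrow> s \<in> space (SampleM n) \<Longrightarrow>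
         Ghat n k s \<in> Gs k \<and> (\<forall>G\<in>Gs k. Wen ehat eps n s G \<le> Wen ehat eps n s (Ghat n k s))"
    and khat_meas: "\<And>n. khat n \<in> measurable (SampleM n) (count_space UNIV)"
    and khat_max: "\<And>n s. s \<in> space (SampleM n) \<Longrightarrow> khat n s \<in> K \<and>
         (\<forall>k\<in>K. Ren ehat eps Cpen n k s (Ghat n k s)
                 \<le> Ren ehat eps Cpen n (khat n s) s (Ghat n (khat n s) s))"
    and Cpen_meas: "\<And>n k. k \<in> K \<Longrightarrow> Cpen n k \<in> borel_measurable (SampleM n)"
    and Ctil_meas: "\<And>P n k. P \<in> Pe \<inter> PMk ps M \<kappa> \<Longrightarrow> k \<in> K \<Longrightarrow>
         Ctil P n k \<in> borel_measurable (SampleM n) \<and> integrable (Pn P n) (Ctil P n k)"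
    and cond_i: "\<exists>c0>0. \<exists>c1>0. \<forall>n\<ge>1. \<forall>k\<in>K. \<forall>\<epsilon>>0. \<forall>P\<in>Pe \<inter> PMk ps M \<kappa>.
         measure (Pn P n) {s \<in> space (Pn P n).
            Wn (ps P) n s (Ghat n k s) - Welfare (ps P) P (Ghat n k s) - Ctil P n k s > \<epsilon>}
           \<le> c1 * exp (- 2 * c0 * real n * \<epsilon>\<^sup>2)"
    and cond_ii: "\<exists>C1>0. \<forall>n\<ge>1. \<forall>k\<in>K. \<forall>P\<in>Pe \<inter> PMk ps M \<kappa>.
         (\<integral>s. Ctil P n k s \<partial>Pn P n) \<le> C1 * sqrt (real (VC_dim (Gs k)) / real n)"
    and cond_iii: "\<exists>c N. \<forall>n\<ge>N. \<forall>P\<in>Pe \<inter> PMk ps M \<kappa>.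
         (\<integral>\<^sup>+ s. (SUP k\<in>K. ennreal \<bar>Cpen n k s - Ctil P n k s\<bar>) \<partial>Pn P n) \<le> ennreal (c / \<phi> n)"
  shows "\<exists>\<Delta>>0. \<exists>c0>0. \<exists>r :: nat \<Rightarrow> real. r \<in> O(\<lambda>n. 1 / \<phi> n) \<and>
     (\<forall>P\<in>Pe \<inter> PMk ps M \<kappa>. \<forall>n\<ge>1. \<forall>k\<in>K.
        (\<integral>s. (Wstar (ps P) P \<G> - Welfare (ps P) P (Ghat n (khat n s) s)) \<partial>Pn P n)
          \<le> (\<integral>s. Ctil P n k s \<partial>Pn P n) + (Wstar (ps P) P \<G> - Wstar (ps P) P (Gs k))
             + sqrt (real k / real n) + r n + sqrt (ln (\<Delta> * exp 1) / (2 * c0 * real n)))"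
proof -
  from cond_i obtain c0 c1 where c0: "c0 > 0" and c1: "c1 > 0" and ci: "\<forall>n\<ge>1. \<forall>k\<in>K. \<forall>\<epsilon>>0. \<forall>P\<in>Pe \<inter> PMk ps M \<kappa>.
         measure (Pn P n) {s \<in> space (Pn P n).
            Wn (ps P) n s (Ghat n k s) - Welfare (ps P) P (Ghat n k s) - Ctil P n k s > \<epsilon>}
           \<le> c1 * exp (- 2 * c0 * real n * \<epsilon>\<^sup>2)" by blast
  from Pe_rate obtain ca Na where pa: "\<forall>n\<ge>Na. \<forall>P\<in>Pe.
         (\<integral>\<^sup>+ s. ennreal ((1 / real n) * (\<Sum>i<n. \<bar>tauhat ehat eps n s i - tau (ps P) (s i)\<bar>)) \<partial>Pn P n)
           \<le> ennreal (ca / \<phi> n)" by blast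
  from cond_iii obtain cb Nb where pb: "\<forall>n\<ge>Nb. \<forall>P\<in>Pe \<inter> PMk ps M \<kappa>.
         (\<integral>\<^sup>+ s. (SUP k\<in>K. ennreal \<bar>Cpen n k s - Ctil P n k s\<bar>) \<partial>Pn P n) \<le> ennreal (cb / \<phi> n)" by blast
  have Kpos: "\<And>k. k \<in> K \<Longrightarrow> 1 \<le> k" using K_index by auto
  have Kc: "countable K" by (rule countableI_type)
  define B where "B = \<bar>M\<bar> / \<kappa>"
  have B0: "B \<ge> 0" using kappa by (simp add: B_def)
  define Hc where "Hc = 1 / (1 - exp (- (2 * c0)))"
  have ex1: "exp (- (2 * c0)) < 1" using c0 by simp
  have Hc0: "Hc > 0" using ex1 by (simp add: Hc_def)
  define A1 where "A1 = c1 * Hc * Hc"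
  define A2 where "A2 = max c1 1 * Hc"
  define At where "At = A1 + 1"
  have A10: "A1 \<ge> 0" using c1 Hc0 by (simp add: A1_def)
  have A20: "A2 \<ge> 0" using Hc0 by (simp add: A2_def)
  define N0 where "N0 = max Na Nb"
  define r where "r n = (if N0 \<le> n \<and> \<phi> n > 0 then 2 * (\<bar>ca\<bar> + \<bar>cb\<bar>) / \<phi> n else 4 * B + A2)" for n
  have bound: "(\<integral>s. (Wstar (ps P) P \<G> - Welfare (ps P) P (Ghat n (khat n s) s)) \<partial>Pn P n)
          \<le> (\<integral>s. Ctil P n k s \<partial>Pn P n) + (Wstar (ps P) P \<G> - Wstar (ps P) P (Gs k))
             + sqrt (real k / real n) + r n + At / sqrt (real n)"
    if P: "P \<in> Pe \<inter> PMk ps M \<kappa>" and n: "n \<ge> 1" and k: "k \<in> K" for P n k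
  proof -
    have PP: "P \<in> PMk ps M \<kappa>" using P by auto
    note F = PMk_facts[OF PP kappa]
    note PN = Pn_facts[OF F(1) F(2), of n]
    interpret Q: prob_space "Pn P n" by (fact PN(1))
    have ms: "\<And>f. f \<in> borel_measurable (SampleM n) \<Longrightarrow> f \<in> borel_measurable (Pn P n)"
      using measurable_cong_sets[OF PN(2) refl] by blast
    have spc: "space (Pn P n) = space (SampleM n)" by (fact PN(3))
    have Gsb: "\<And>j. j \<in> K \<Longrightarrow> Gs j \<subseteq> sets borel" using Gs_sub G_meas by blast
    obtain s0 where "s0 \<in> space (Pn P n)" using Q.not_empty by blast
    then have s0: "s0 \<in> space (SampleM n)" using spc by simp
    have Gne: "\<And>j. j \<in> K \<Longrightarrow> Gs j \<noteq> {}" using Ghat_max s0 by blast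
    have Gne': "\<G> \<noteq> {}" using Gne[OF k] Gs_sub[OF k] by blast
    have Ghb: "\<And>j s. j \<in> K \<Longrightarrow> s \<in> space (SampleM n) \<Longrightarrow> Ghat n j s \<in> sets borel"
      using Ghat_max Gsb by blast
    have WGh: "\<And>j s. j \<in> K \<Longrightarrow> s \<in> space (SampleM n) \<Longrightarrow> \<bar>Welfare (ps P) P (Ghat n j s)\<bar> \<le> B"
      using welfare_facts(2)[OF PP kappa] Ghb unfolding B_def by blast
    have wm: "\<And>j. j \<in> K \<Longrightarrow> (\<lambda>s. Welfare (ps P) P (Ghat n j s)) \<in> borel_measurable (SampleM n)"
      by (rule welfare_meas[OF F(1) F(2) F(4) Ghat_meas])
    have "(\<lambda>s. (\<lambda>j s. Welfare (ps P) P (Ghat n j s)) (khat n s) s) \<in> borel_measurable (SampleM n)"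
      by (rule compose_K[where K=K]) (use wm khat_meas khat_max in auto)
    then have fm: "(\<lambda>s. Wstar (ps P) P \<G> - Welfare (ps P) P (Ghat n (khat n s) s)) \<in> borel_measurable (Pn P n)"
      by (intro ms) simp
    have WG: "Wstar (ps P) P \<G> \<le> B" "- B \<le> Wstar (ps P) P \<G>"
      using Wstar_facts(3,4)[OF PP kappa G_meas Gne'] unfolding B_def by auto
    have Wk: "Wstar (ps P) P (Gs k) \<le> B" "- B \<le> Wstar (ps P) P (Gs k)"
      using Wstar_facts(3,4)[OF PP kappa Gsb[OF k] Gne[OF k]] unfolding B_def by auto
    have fb: "\<And>s. s \<in> space (Pn P n) \<Longrightarrow> \<bar>Wstar (ps P) P \<G> - Welfare (ps P) P (Ghat n (khat n s) s)\<bar> \<le> 2 * B"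
    proof -
      fix s assume "s \<in> space (Pn P n)"
      then have "\<bar>Welfare (ps P) P (Ghat n (khat n s) s)\<bar> \<le> B" using WGh khat_max spc by auto
      then show "\<bar>Wstar (ps P) P \<G> - Welfare (ps P) P (Ghat n (khat n s) s)\<bar> \<le> 2 * B" using WG by linarith
    qed
    have fi: "integrable (Pn P n) (\<lambda>s. Wstar (ps P) P \<G> - Welfare (ps P) P (Ghat n (khat n s) s))"
      by (rule Q.integrable_const_bound[where B="2 * B"]) (use fb fm in auto)
    have Ci: "integrable (Pn P n) (Ctil P n k)" using Ctil_meas[OF P k] by auto
    have cij: "\<And>j (\<epsilon>::real). j \<in> K \<Longrightarrow> \<epsilon> > 0 \<Longrightarrow> measure (Pn P n) {s \<in> space (Pn P n).
            Wn (ps P) n s (Ghat n j s) - Welfare (ps P) P (Ghat n j s) - Ctil P n j s > \<epsilon>}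
           \<le> c1 * exp (- 2 * c0 * real n * \<epsilon>\<^sup>2)"
    proof -
      fix j and \<epsilon> :: real assume "j \<in> K" "\<epsilon> > 0"
      then show "measure (Pn P n) {s \<in> space (Pn P n).
            Wn (ps P) n s (Ghat n j s) - Welfare (ps P) P (Ghat n j s) - Ctil P n j s > \<epsilon>}
           \<le> c1 * exp (- 2 * c0 * real n * \<epsilon>\<^sup>2)" using ci n P by blast
    qed
    show ?thesis
    proof (cases "N0 \<le> n \<and> \<phi> n > 0")
      case True
      have nN: "Na \<le> n" "Nb \<le> n" and phi0: "\<phi> n > 0" using True by (auto simp: N0_def)
      have rn: "r n = 2 * (\<bar>ca\<bar> + \<bar>cb\<bar>) / \<phi> n" using True by (simp add: r_def)
      define D where "D s = (1 / real n) * (\<Sum>i<n. \<bar>tauhat ehat eps n s i - tau (ps P) (s i)\<bar>)" for s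
      define Sn where "Sn s = (SUP j\<in>K. ennreal \<bar>Cpen n j s - Ctil P n j s\<bar>)" for s
      define Z where "Z j s = Wn (ps P) n s (Ghat n j s) - Welfare (ps P) P (Ghat n j s) - Ctil P n j s - sqrt (real j / real n)" for j s
      define Tt where "Tt s = (\<Sum>j. if j \<in> K then ennreal (max (Z j s) 0) else 0)" for s
      define BB where "BB s = 2 * ennreal (D s) + 2 * Sn s + Tt s" for s
      define Bd where "Bd = 2 * (\<bar>ca\<bar> / \<phi> n) + 2 * (\<bar>cb\<bar> / \<phi> n) + A1 / sqrt (real n)"
      have D0: "\<And>s. D s \<ge> 0" unfolding D_def by (simp add: sum_nonneg)
      have Dm: "D \<in> borel_measurable (Pn P n)"
        unfolding D_def[abs_def] by (intro ms D_meas[OF F(4) ehat_meas])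
      have Snm: "Sn \<in> borel_measurable (Pn P n)"
        unfolding Sn_def[abs_def]
      proof (rule borel_measurable_SUP[OF Kc])
        fix j assume j: "j \<in> K"
        have "Cpen n j \<in> borel_measurable (Pn P n)" by (intro ms Cpen_meas j)
        moreover have "Ctil P n j \<in> borel_measurable (Pn P n)" using Ctil_meas[OF P j] ms by blast
        ultimately show "(\<lambda>x. ennreal \<bar>Cpen n j x - Ctil P n j x\<bar>) \<in> borel_measurable (Pn P n)" by measurable
      qed
      have Zm: "Z j \<in> borel_measurable (Pn P n)" if j: "j \<in> K" for j
      proof -
        have "(\<lambda>s. Wn (ps P) n s (Ghat n j s)) \<in> borel_measurable (Pn P n)"
          by (intro ms Wn_meas[OF F(4) Ghat_meas[OF j]])
        moreover have "(\<lambda>s. Welfare (ps P) P (Ghat n j s)) \<in> borel_measurable (Pn P n)" by (intro ms wm j)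
        moreover have "Ctil P n j \<in> borel_measurable (Pn P n)" using Ctil_meas[OF P j] ms by blast
        ultimately show ?thesis unfolding Z_def[abs_def] by measurable
      qed
      have termm: "(\<lambda>s. if j \<in> K then ennreal (max (Z j s) 0) else 0) \<in> borel_measurable (Pn P n)" for j
        by (cases "j \<in> K") (use Zm in auto)
      have Ttm: "Tt \<in> borel_measurable (Pn P n)"
        unfolding Tt_def[abs_def] by (rule borel_measurable_suminf_order) (rule termm)
      have BBm: "BB \<in> borel_measurable (Pn P n)" unfolding BB_def[abs_def] using Dm Snm Ttm by measurable
      have Dint: "(\<integral>\<^sup>+s. ennreal (D s) \<partial>Pn P n) \<le> ennreal (\<bar>ca\<bar> / \<phi> n)"
      proof -
        have "(\<integral>\<^sup>+s. ennreal (D s) \<partial>Pn P n) \<le> ennreal (ca / \<phi> n)" using pa nN P unfolding D_def by blast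
        also have "\<dots> \<le> ennreal (\<bar>ca\<bar> / \<phi> n)" using phi0 by (intro ennreal_leI divide_right_mono) auto
        finally show ?thesis .
      qed
      have Sint: "(\<integral>\<^sup>+s. Sn s \<partial>Pn P n) \<le> ennreal (\<bar>cb\<bar> / \<phi> n)"
      proof -
        have "(\<integral>\<^sup>+s. Sn s \<partial>Pn P n) \<le> ennreal (cb / \<phi> n)" using pb nN P unfolding Sn_def by blast
        also have "\<dots> \<le> ennreal (\<bar>cb\<bar> / \<phi> n)" using phi0 by (intro ennreal_leI divide_right_mono) auto
        finally show ?thesis .
      qed
      have Tint: "(\<integral>\<^sup>+s. Tt s \<partial>Pn P n) \<le> ennreal (A1 / sqrt (real n))"
      proof -
        have "(\<integral>\<^sup>+s. Tt s \<partial>Pn P n) = (\<Sum>j. \<integral>\<^sup>+s. (if j \<in> K then ennreal (max (Z j s) 0) else 0) \<partial>Pn P n)"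
          unfolding Tt_def by (rule nn_integral_suminf) (rule termm)
        also have "\<dots> \<le> (\<Sum>j. ennreal (c1 * Hc / sqrt (real n) * exp (- (2 * c0)) ^ j))"
        proof (intro suminf_le summableI)
          fix j
          show "(\<integral>\<^sup>+s. (if j \<in> K then ennreal (max (Z j s) 0) else 0) \<partial>Pn P n) \<le> ennreal (c1 * Hc / sqrt (real n) * exp (- (2 * c0)) ^ j)"
          proof (cases "j \<in> K")
            case False then show ?thesis by simp
          next
            case j: True
            have j1: "real j \<ge> 1" using Kpos[OF j] by simp
            have "(\<integral>\<^sup>+s. ennreal (max (Z j s) 0) \<partial>Pn P n) \<le> ennreal (c1 * exp (- (2 * c0)) ^ j / (1 - exp (- (2 * c0))) / sqrt (real n))"
            proof (rule tail_lemma[OF PN(1) Zm[OF j] _ _ n])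
              show "0 \<le> c1 * exp (- (2 * c0)) ^ j" using c1 by simp
              show "0 < 2 * c0" using c0 by simp
              fix t :: real assume t: "t \<ge> 0"
              define u where "u = sqrt (real j / real n)"
              have u0: "u > 0" using j1 n by (simp add: u_def)
              have nu: "real n * u\<^sup>2 = real j" using n j1 by (simp add: u_def)
              have "{s \<in> space (Pn P n). t < Z j s} = {s \<in> space (Pn P n). Wn (ps P) n s (Ghat n j s) - Welfare (ps P) P (Ghat n j s) - Ctil P n j s > t + u}"
                unfolding Z_def u_def by auto
              moreover have "measure (Pn P n) {s \<in> space (Pn P n). Wn (ps P) n s (Ghat n j s) - Welfare (ps P) P (Ghat n j s) - Ctil P n j s > t + u} \<le> c1 * exp (- 2 * c0 * real n * (t + u)\<^sup>2)"
                using cij[OF j, of "t + u"] t u0 by simp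
              ultimately have "measure (Pn P n) {s \<in> space (Pn P n). t < Z j s} \<le> c1 * exp (- 2 * c0 * real n * (t + u)\<^sup>2)"
                by simp
              also have "\<dots> \<le> c1 * exp (- (2 * c0)) ^ j * exp (- (2 * c0) * real n * t\<^sup>2)"
              proof -
                have "real n * t\<^sup>2 + real j \<le> real n * (t + u)\<^sup>2"
                proof -
                  have "t\<^sup>2 + u\<^sup>2 \<le> (t + u)\<^sup>2" using t u0 by (simp add: power2_sum)
                  then have "real n * (t\<^sup>2 + u\<^sup>2) \<le> real n * (t + u)\<^sup>2" by (intro mult_left_mono) auto
                  then show ?thesis using nu by (simp add: distrib_left)
                qed
                then have "- 2 * c0 * real n * (t + u)\<^sup>2 \<le> - (2 * c0) * real j + - (2 * c0) * real n * t\<^sup>2"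
                proof -
                  assume h: "real n * t\<^sup>2 + real j \<le> real n * (t + u)\<^sup>2"
                  have "2*c0*(real n * t\<^sup>2 + real j) \<le> 2*c0*(real n * (t + u)\<^sup>2)" using h c0 by (intro mult_left_mono) auto
                  then show ?thesis by (simp add: algebra_simps)
                qed
                then have "exp (- 2 * c0 * real n * (t + u)\<^sup>2) \<le> exp (- (2 * c0) * real j) * exp (- (2 * c0) * real n * t\<^sup>2)"
                  by (simp add: exp_add[symmetric])
                moreover have "exp (- (2 * c0) * real j) = exp (- (2 * c0)) ^ j"
                  by (simp add: exp_of_nat_mult[symmetric] mult.commute)
                ultimately show ?thesis using c1 by (simp add: mult.assoc mult_left_mono)
              qed
              finally show "measure (Pn P n) {s \<in> space (Pn P n). t < Z j s} \<le> c1 * exp (- (2 * c0)) ^ j * exp (- (2 * c0) * real n * t\<^sup>2)" .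
            qed
            also have "c1 * exp (- (2 * c0)) ^ j / (1 - exp (- (2 * c0))) / sqrt (real n) = c1 * Hc / sqrt (real n) * exp (- (2 * c0)) ^ j"
              by (simp add: Hc_def)
            finally show ?thesis using j by simp
          qed
        qed
        also have "\<dots> = ennreal (c1 * Hc / sqrt (real n) * Hc)"
        proof (rule suminf_ennreal_eq)
          show "\<And>i. 0 \<le> c1 * Hc / sqrt (real n) * exp (- (2 * c0)) ^ i" using c1 Hc0 by simp
          have "(\<lambda>j. exp (- (2 * c0)) ^ j) sums Hc"
            using geometric_sums[of "exp (- (2 * c0))"] ex1 by (simp add: Hc_def)
          then show "(\<lambda>j. c1 * Hc / sqrt (real n) * exp (- (2 * c0)) ^ j) sums (c1 * Hc / sqrt (real n) * Hc)"
            by (rule sums_mult)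
        qed
        also have "c1 * Hc / sqrt (real n) * Hc = A1 / sqrt (real n)" by (simp add: A1_def)
        finally show ?thesis .
      qed
      have BBint: "(\<integral>\<^sup>+s. BB s \<partial>Pn P n) \<le> ennreal Bd"
      proof -
        have "(\<integral>\<^sup>+s. BB s \<partial>Pn P n) = 2 * (\<integral>\<^sup>+s. ennreal (D s) \<partial>Pn P n) + 2 * (\<integral>\<^sup>+s. Sn s \<partial>Pn P n) + (\<integral>\<^sup>+s. Tt s \<partial>Pn P n)"
          unfolding BB_def using Dm Snm Ttm
          by (simp add: nn_integral_add nn_integral_cmult)
        also have "\<dots> \<le> 2 * ennreal (\<bar>ca\<bar> / \<phi> n) + 2 * ennreal (\<bar>cb\<bar> / \<phi> n) + ennreal (A1 / sqrt (real n))"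
          using Dint Sint Tint by (intro add_mono mult_left_mono) auto
        also have "\<dots> = ennreal Bd"
        proof -
          have h: "0 \<le> (x::real) \<Longrightarrow> 0 \<le> y \<Longrightarrow> 0 \<le> z \<Longrightarrow> 2 * ennreal x + 2 * ennreal y + ennreal z = ennreal (2 * x + 2 * y + z)" for x y z
            by (simp add: ennreal_plus ennreal_mult del: ennreal_plus_if)
          show ?thesis unfolding Bd_def by (rule h) (use phi0 A10 in auto)
        qed
        finally show ?thesis .
      qed
      have Bd0: "Bd \<ge> 0" using phi0 A10 by (simp add: Bd_def)
      have BBfin: "AE s in Pn P n. BB s \<noteq> \<top>"
      proof -
        have "integral\<^sup>N (Pn P n) BB < \<top>" using le_less_trans[OF BBint ennreal_less_top] .
        then have "integral\<^sup>N (Pn P n) BB \<noteq> \<infinity>" by (simp add: less_top)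
        from nn_integral_PInf_AE[OF BBm this] show ?thesis by simp
      qed
      have BBr_m: "(\<lambda>s. enn2real (BB s)) \<in> borel_measurable (Pn P n)" using BBm by measurable
      have BBr_nn: "(\<integral>\<^sup>+s. ennreal (enn2real (BB s)) \<partial>Pn P n) = (\<integral>\<^sup>+s. BB s \<partial>Pn P n)"
        by (rule nn_integral_cong_AE) (use BBfin in \<open>auto elim!: AE_mp simp: less_top\<close>)
      have BBi: "integrable (Pn P n) (\<lambda>s. enn2real (BB s))"
        by (rule integrableI_nonneg[OF BBr_m]) (use BBr_nn BBint in \<open>auto simp: less_top[symmetric] top_unique\<close>)
      have BBI: "(\<integral>s. enn2real (BB s) \<partial>Pn P n) \<le> Bd"
      proof -
        have "(\<integral>s. enn2real (BB s) \<partial>Pn P n) = enn2real (\<integral>\<^sup>+s. BB s \<partial>Pn P n)"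
          using integral_eq_nn_integral[OF BBr_m] BBr_nn by simp
        also have "\<dots> \<le> enn2real (ennreal Bd)" by (rule enn2real_mono[OF BBint]) simp
        finally show ?thesis using Bd0 by simp
      qed
      have key: "(\<integral>s. Wstar (ps P) P \<G> - Welfare (ps P) P (Ghat n (khat n s) s) \<partial>Pn P n)
          \<le> Wstar (ps P) P \<G> - Welfare (ps P) P G + (\<integral>s. Ctil P n k s \<partial>Pn P n) + sqrt (real k / real n) + Bd"
        if G: "G \<in> Gs k" for G
      proof -
        have Gb: "G \<in> sets borel" using G Gsb[OF k] by auto
        note WE = Wn_expect[OF PP kappa Gb n]
        define A where "A s = Wstar (ps P) P \<G> - Wn (ps P) n s G + Ctil P n k s + sqrt (real k / real n) + enn2real (BB s)" for s
        have Ai: "integrable (Pn P n) A" unfolding A_def using WE(1) Ci BBi by auto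
        have AI: "(\<integral>s. A s \<partial>Pn P n) = Wstar (ps P) P \<G> - Welfare (ps P) P G + (\<integral>s. Ctil P n k s \<partial>Pn P n) + sqrt (real k / real n) + (\<integral>s. enn2real (BB s) \<partial>Pn P n)"
          unfolding A_def using WE Ci BBi by (simp add: Q.prob_space)
        have pw: "AE s in Pn P n. Wstar (ps P) P \<G> - Welfare (ps P) P (Ghat n (khat n s) s) \<le> A s"
          using BBfin
        proof (rule AE_mp, intro AE_I2 impI)
          fix s assume s': "s \<in> space (Pn P n)" and fin: "BB s \<noteq> \<top>"
          have s: "s \<in> space (SampleM n)" using s' spc by simp
          define kh where "kh = khat n s"
          have kh: "kh \<in> K" and rmax: "Ren ehat eps Cpen n k s (Ghat n k s) \<le> Ren ehat eps Cpen n kh s (Ghat n kh s)"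
            using khat_max[OF s] k unfolding kh_def by auto
          have gmax: "Wen ehat eps n s G \<le> Wen ehat eps n s (Ghat n k s)" using Ghat_max[OF k s] G by auto
          have d1: "\<bar>Wen ehat eps n s G - Wn (ps P) n s G\<bar> \<le> D s" unfolding D_def by (rule Wen_Wn_le)
          have d2: "\<bar>Wen ehat eps n s (Ghat n kh s) - Wn (ps P) n s (Ghat n kh s)\<bar> \<le> D s" unfolding D_def by (rule Wen_Wn_le)
          have Snf: "Sn s \<noteq> \<top>" and Ttf: "Tt s \<noteq> \<top>" using fin unfolding BB_def by (auto simp: ennreal_mult_eq_top_iff)
          have BBe: "enn2real (BB s) = 2 * D s + 2 * enn2real (Sn s) + enn2real (Tt s)"
            unfolding BB_def using Snf Ttf D0[of s]
            using enn_aux[of "Sn s" "Tt s" "D s"] Snf Ttf D0[of s] by (simp add: less_top)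
          have sb: "\<bar>Cpen n j s - Ctil P n j s\<bar> \<le> enn2real (Sn s)" if j: "j \<in> K" for j
          proof -
            have "ennreal \<bar>Cpen n j s - Ctil P n j s\<bar> \<le> Sn s" unfolding Sn_def by (rule SUP_upper[OF j])
            then have "enn2real (ennreal \<bar>Cpen n j s - Ctil P n j s\<bar>) \<le> enn2real (Sn s)"
              by (rule enn2real_mono) (use Snf in \<open>simp add: less_top\<close>)
            then show ?thesis by simp
          qed
          have tb: "Z kh s \<le> enn2real (Tt s)"
          proof -
            have "ennreal (max (Z kh s) 0) = (if kh \<in> K then ennreal (max (Z kh s) 0) else 0)" using kh by simp
            also have "\<dots> \<le> Tt s" unfolding Tt_def
              by (rule sum_le_suminf[OF summableI, of "{kh}", simplified])
            finally have e: "enn2real (ennreal (max (Z kh s) 0)) \<le> enn2real (Tt s)"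
              by (rule enn2real_mono) (use Ttf in \<open>simp add: less_top\<close>)
            have "enn2real (ennreal (max (Z kh s) 0)) = max (Z kh s) 0" by (rule enn2real_ennreal) simp
            then show ?thesis using e by linarith
          qed
          have "sqrt (real kh / real n) \<ge> 0" by simp
          show "Wstar (ps P) P \<G> - Welfare (ps P) P (Ghat n (khat n s) s) \<le> A s"
            using rmax gmax d1 d2 sb[OF kh] sb[OF k] tb BBe
            unfolding A_def Ren_def Z_def kh_def[symmetric] by linarith
        qed
        have "(\<integral>s. Wstar (ps P) P \<G> - Welfare (ps P) P (Ghat n (khat n s) s) \<partial>Pn P n) \<le> (\<integral>s. A s \<partial>Pn P n)"
          by (rule integral_mono_AE[OF fi Ai pw])
        then show ?thesis using AI BBI by linarith
      qed
      have "Wstar (ps P) P (Gs k) \<le> Wstar (ps P) P \<G> + (\<integral>s. Ctil P n k s \<partial>Pn P n) + sqrt (real k / real n) + Bd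
            - (\<integral>s. Wstar (ps P) P \<G> - Welfare (ps P) P (Ghat n (khat n s) s) \<partial>Pn P n)"
        unfolding Wstar_def[of _ _ "Gs k"]
        by (rule cSUP_least[OF Gne[OF k]]) (use key in fastforce)
      moreover have "At / sqrt (real n) \<ge> A1 / sqrt (real n)" by (simp add: At_def divide_right_mono)
      moreover have "Bd = 2 * (\<bar>ca\<bar> + \<bar>cb\<bar>) / \<phi> n + A1 / sqrt (real n)" unfolding Bd_def by (simp add: add_divide_distrib)
      ultimately show ?thesis using rn by linarith
    next
      case False
      have rn: "r n = 4 * B + A2" using False unfolding r_def by auto
      have "(\<integral>s. Wstar (ps P) P \<G> - Welfare (ps P) P (Ghat n (khat n s) s) \<partial>Pn P n)
            \<le> (\<integral>s. Wstar (ps P) P \<G> - Wstar (ps P) P (Gs k) + 2 * B \<partial>Pn P n)"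
      proof (rule integral_mono[OF fi])
        show "integrable (Pn P n) (\<lambda>s. Wstar (ps P) P \<G> - Wstar (ps P) P (Gs k) + 2 * B)" by simp
        fix s assume "s \<in> space (Pn P n)"
        then have "\<bar>Welfare (ps P) P (Ghat n (khat n s) s)\<bar> \<le> B" using WGh khat_max spc by auto
        then show "Wstar (ps P) P \<G> - Welfare (ps P) P (Ghat n (khat n s) s) \<le> Wstar (ps P) P \<G> - Wstar (ps P) P (Gs k) + 2 * B"
          using Wk by linarith
      qed
      then have f_le: "(\<integral>s. Wstar (ps P) P \<G> - Welfare (ps P) P (Ghat n (khat n s) s) \<partial>Pn P n)
            \<le> Wstar (ps P) P \<G> - Wstar (ps P) P (Gs k) + 2 * B" by (simp add: Q.prob_space)
      define Y where "Y s = Wn (ps P) n s (Ghat n k s) - Welfare (ps P) P (Ghat n k s) - Ctil P n k s" for s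
      have wnm: "(\<lambda>s. Wn (ps P) n s (Ghat n k s)) \<in> borel_measurable (Pn P n)"
        by (intro ms Wn_meas[OF F(4) Ghat_meas[OF k]])
      have wni: "integrable (Pn P n) (\<lambda>s. Wn (ps P) n s (Ghat n k s))"
        by (rule Bochner_Integration.integrable_bound[OF abs_tau_sum(1)[OF PP kappa n] wnm])
          (auto intro!: AE_I2 order_trans[OF Wn_abs_le] simp: sum_nonneg)
      have "(\<integral>s. - ((1 / real n) * (\<Sum>i<n. \<bar>tau (ps P) (s i)\<bar>)) \<partial>Pn P n) \<le> (\<integral>s. Wn (ps P) n s (Ghat n k s) \<partial>Pn P n)"
      proof (rule integral_mono)
        show "integrable (Pn P n) (\<lambda>s. - ((1 / real n) * (\<Sum>i<n. \<bar>tau (ps P) (s i)\<bar>)))"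
          using abs_tau_sum(1)[OF PP kappa n] by simp
        show "integrable (Pn P n) (\<lambda>s. Wn (ps P) n s (Ghat n k s))" by (fact wni)
        fix s
        have "\<bar>Wn (ps P) n s (Ghat n k s)\<bar> \<le> (1 / real n) * (\<Sum>i<n. \<bar>tau (ps P) (s i)\<bar>)" by (rule Wn_abs_le)
        then show "- ((1 / real n) * (\<Sum>i<n. \<bar>tau (ps P) (s i)\<bar>)) \<le> Wn (ps P) n s (Ghat n k s)" by linarith
      qed
      then have wnl: "- B \<le> (\<integral>s. Wn (ps P) n s (Ghat n k s) \<partial>Pn P n)"
        using abs_tau_sum(2)[OF PP kappa n] unfolding B_def by simp
      have wkm: "(\<lambda>s. Welfare (ps P) P (Ghat n k s)) \<in> borel_measurable (Pn P n)"
        by (intro ms wm k)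
      have wki: "integrable (Pn P n) (\<lambda>s. Welfare (ps P) P (Ghat n k s))"
        by (rule Q.integrable_const_bound[where B=B]) (use WGh k spc wkm in auto)
      have "(\<integral>s. Welfare (ps P) P (Ghat n k s) \<partial>Pn P n) \<le> (\<integral>s. B \<partial>Pn P n)"
        by (rule integral_mono) (use wki WGh k spc in \<open>auto simp: abs_le_iff\<close>)
      then have wkl: "(\<integral>s. Welfare (ps P) P (Ghat n k s) \<partial>Pn P n) \<le> B" by (simp add: Q.prob_space)
      have Yi: "integrable (Pn P n) Y" unfolding Y_def using wni wki Ci by auto
      have Ym: "Y \<in> borel_measurable (Pn P n)" using Yi by auto
      have Ye: "(\<integral>s. Y s \<partial>Pn P n) = (\<integral>s. Wn (ps P) n s (Ghat n k s) \<partial>Pn P n) - (\<integral>s. Welfare (ps P) P (Ghat n k s) \<partial>Pn P n) - (\<integral>s. Ctil P n k s \<partial>Pn P n)"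
        unfolding Y_def using wni wki Ci by simp
      have mYi: "integrable (Pn P n) (\<lambda>s. max (Y s) 0)"
        by (rule Bochner_Integration.integrable_bound[OF Yi]) (use Ym in auto)
      have "(\<integral>s. Y s \<partial>Pn P n) \<le> (\<integral>s. max (Y s) 0 \<partial>Pn P n)"
        by (rule integral_mono[OF Yi mYi]) auto
      also have "\<dots> = enn2real (\<integral>\<^sup>+s. ennreal (max (Y s) 0) \<partial>Pn P n)"
        by (rule integral_eq_nn_integral) (use Ym in auto)
      also have "\<dots> \<le> max c1 1 / (1 - exp (- (2 * c0))) / sqrt (real n)"
      proof -
        have "(\<integral>\<^sup>+s. ennreal (max (Y s) 0) \<partial>Pn P n) \<le> ennreal (max c1 1 / (1 - exp (- (2 * c0))) / sqrt (real n))"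
        proof (rule tail_lemma[OF PN(1) Ym _ _ n])
          show "0 \<le> max c1 1" by simp
          show "0 < 2 * c0" using c0 by simp
          fix t :: real assume t: "t \<ge> 0"
          show "measure (Pn P n) {s \<in> space (Pn P n). t < Y s} \<le> max c1 1 * exp (- (2 * c0) * real n * t\<^sup>2)"
          proof (cases "t = 0")
            case True
            have "measure (Pn P n) {s \<in> space (Pn P n). t < Y s} \<le> 1" by (rule Q.prob_le_1)
            also have "1 \<le> max c1 1" by simp
            finally show ?thesis using True by simp
          next
            case False
            then have "t > 0" using t by simp
            then have "measure (Pn P n) {s \<in> space (Pn P n). t < Y s} \<le> c1 * exp (- 2 * c0 * real n * t\<^sup>2)"
              using cij[OF k, of t] unfolding Y_def by simp
            also have "\<dots> \<le> max c1 1 * exp (- (2 * c0) * real n * t\<^sup>2)"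
            proof -
              have "c1 * exp (- (2 * c0) * real n * t\<^sup>2) \<le> max c1 1 * exp (- (2 * c0) * real n * t\<^sup>2)"
                by (intro mult_right_mono) auto
              then show ?thesis by simp
            qed
            finally show ?thesis .
          qed
        qed
        moreover have "0 \<le> max c1 1 / (1 - exp (- (2 * c0))) / sqrt (real n)" using ex1 by simp
        ultimately show ?thesis by (simp add: enn2real_leI)
      qed
      also have "\<dots> \<le> A2"
      proof -
        have s1: "sqrt (real n) \<ge> 1" using n by simp
        have "A2 * 1 \<le> A2 * sqrt (real n)" by (rule mult_left_mono[OF s1 A20])
        then have "A2 / sqrt (real n) \<le> A2" using s1 by (simp add: divide_le_eq)
        then show ?thesis by (simp add: A2_def Hc_def)
      qed
      finally have "(\<integral>s. Y s \<partial>Pn P n) \<le> A2" .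
      then have "(\<integral>s. Ctil P n k s \<partial>Pn P n) \<ge> - 2 * B - A2" using Ye wnl wkl by linarith
      moreover have "0 \<le> At / sqrt (real n)" using A10 by (simp add: At_def)
      moreover have "0 \<le> sqrt (real k / real n)" by simp
      ultimately show ?thesis using f_le rn by linarith
    qed
  qed
  define c0' where "c0' = 1 / (2 * At\<^sup>2)"
  have At0: "At > 0" using A10 by (simp add: At_def)
  have c0'0: "c0' > 0" using At0 by (simp add: c0'_def)
  have eq: "sqrt (ln (1 * exp 1) / (2 * c0' * real n)) = At / sqrt (real n)" if n: "n \<ge> 1" for n :: nat
  proof -
    have "ln (1 * exp 1) / (2 * c0' * real n) = (At / sqrt (real n))\<^sup>2"
      using n At0 by (simp add: c0'_def power_divide field_simps)
    then show ?thesis using At0 by simp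
  qed
  have ev: "eventually (\<lambda>n. N0 \<le> n \<and> \<phi> n > 0) at_top"
  proof -
    have "eventually (\<lambda>n. 0 < \<phi> n) at_top" using phi_lim unfolding filterlim_at_top_dense by blast
    moreover have "eventually (\<lambda>n. N0 \<le> n) at_top" by (rule eventually_ge_at_top)
    ultimately show ?thesis by eventually_elim auto
  qed
  have rO: "r \<in> O(\<lambda>n. 1 / \<phi> n)"
  proof (rule bigoI[where c="2 * (\<bar>ca\<bar> + \<bar>cb\<bar>)"])
    show "\<forall>\<^sub>F n in at_top. norm (r n) \<le> 2 * (\<bar>ca\<bar> + \<bar>cb\<bar>) * norm (1 / \<phi> n)"
      using ev by eventually_elim (auto simp: r_def)
  qed
  have main: "\<forall>P\<in>Pe \<inter> PMk ps M \<kappa>. \<forall>n\<ge>(1::nat). \<forall>k\<in>K.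
        (\<integral>s. (Wstar (ps P) P \<G> - Welfare (ps P) P (Ghat n (khat n s) s)) \<partial>Pn P n)
          \<le> (\<integral>s. Ctil P n k s \<partial>Pn P n) + (Wstar (ps P) P \<G> - Wstar (ps P) P (Gs k))
             + sqrt (real k / real n) + r n + sqrt (ln (1 * exp 1) / (2 * c0' * real n))"
  proof (intro ballI allI impI)
    fix P and n :: nat and k assume P: "P \<in> Pe \<inter> PMk ps M \<kappa>" and n: "1 \<le> n" and k: "k \<in> K"
    show "(\<integral>s. (Wstar (ps P) P \<G> - Welfare (ps P) P (Ghat n (khat n s) s)) \<partial>Pn P n)
          \<le> (\<integral>s. Ctil P n k s \<partial>Pn P n) + (Wstar (ps P) P \<G> - Wstar (ps P) P (Gs k))
             + sqrt (real k / real n) + r n + sqrt (ln (1 * exp 1) / (2 * c0' * real n))"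
      using bound[OF P n k] eq[OF n] by simp
  qed
  have one: "(0::real) < 1" by simp
  show ?thesis using one c0'0 rO main by blast
qed

end
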